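(* Work in round-to-nearest mode with $u=2^{-p}$. Let $x_h,x_l,y_h,y_l\in\mathbb{F}_p$ satisfy $\mathrm{RN}(x_h+x_l)=x_h$ and $\mathrm{RN}(y_h+y_l)=y_h$, and suppose $x_h$ and $y_h$ have opposite signs. Run the sloppy addition algorithm with all operations in $\mathrm{RN}$: 1. $(s_h,s_l)=\mathrm{2Sum}(x_h,y_h)$; 2. $v=\mathrm{RN}(x_l+y_l)$; 3. $w=\mathrm{RN}(s_l+v)$; 4. $(z_h,z_l)=\mathrm{Fast2Sum}(s_h,w)$. Let $\varepsilon=\dfrac{|z_h+z_l-(x_h+x_l+y_h+y_l)|}{|x_h+x_l+y_h+y_l|}$ be its relative error. (i) If $r(x_h,y_h)\le\frac12$, then $\varepsilon\le 3u^2+O(u^3)$. (ii) If $r(x_h,y_h)>\frac12$, the tie-breaking rule of $\mathrm{RN}$ is ties-to-even or ties-to-away, and $|x_h|$ and $|y_h|$ are not two consecutive floating-point numbers, then $\varepsilon\le u$.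
   Context: $\mathbb{F}_p$ is the set of radix-2, precision-$p$ floating-point numbers with unbounded exponent range. $\mathrm{RN}$ denotes rounding to nearest (with some tie-breaking rule), and $u=2^{-p}$. For reals $x,y$, $r(x,y)=\min(|x|,|y|)/\max(|x|,|y|)$ if $xy<0$, and $r(x,y)=0$ otherwise. $\mathrm{2Sum}(a,b)$ computes, in order, $s=\mathrm{RN}(a+b)$, $a'=\mathrm{RN}(s-b)$, $b'=\mathrm{RN}(s-a')$, $\delta_a=\mathrm{RN}(a-a')$, $\delta_b=\mathrm{RN}(b-b')$, $t=\mathrm{RN}(\delta_a+\delta_b)$, and returns $(s,t)$. $\mathrm{Fast2Sum}(a,b)$ computes $s=\mathrm{RN}(a+b)$ and $t=\mathrm{RN}(b-\mathrm{RN}(s-a))$, and returns $(s,t)$. *)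

theory Defs
  imports Complex_Main
begin

text \<open>Radix-2, precision-p floating-point numbers with unbounded exponent range.\<close>
definition Fp :: "nat \<Rightarrow> real set" where
  "Fp p = {x. \<exists>m e :: int. x = of_int m * 2 powr of_int e \<and> \<bar>m\<bar> < 2 ^ p}"

definition unit_round :: "nat \<Rightarrow> real" where
  "unit_round p = 2 powr (- real p)"

definition is_nearest :: "nat \<Rightarrow> real \<Rightarrow> real \<Rightarrow> bool" where
  "is_nearest p x f \<longleftrightarrow> f \<in> Fp p \<and> (\<forall>g \<in> Fp p. \<bar>f - x\<bar> \<le> \<bar>g - x\<bar>)"

definition is_RN :: "nat \<Rightarrow> (real \<Rightarrow> real) \<Rightarrow> bool" where
  "is_RN p rn \<longleftrightarrow> (\<forall>x. is_nearest p x (rn x))"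

definition even_float :: "nat \<Rightarrow> real \<Rightarrow> bool" where
  "even_float p f \<longleftrightarrow> (\<exists>m e :: int. f = of_int m * 2 powr of_int e \<and>
      2 ^ (p - 1) \<le> \<bar>m\<bar> \<and> \<bar>m\<bar> < 2 ^ p \<and> even m)"

definition ties_to_even :: "nat \<Rightarrow> (real \<Rightarrow> real) \<Rightarrow> bool" where
  "ties_to_even p rn \<longleftrightarrow>
     (\<forall>x f. is_nearest p x f \<and> f \<noteq> rn x \<longrightarrow> even_float p (rn x))"

definition ties_to_away :: "nat \<Rightarrow> (real \<Rightarrow> real) \<Rightarrow> bool" where
  "ties_to_away p rn \<longleftrightarrow> (\<forall>x f. is_nearest p x f \<longrightarrow> \<bar>f\<bar> \<le> \<bar>rn x\<bar>)"

definition ratio_r :: "real \<Rightarrow> real \<Rightarrow> real" where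
  "ratio_r x y = (if x * y < 0 then min \<bar>x\<bar> \<bar>y\<bar> / max \<bar>x\<bar> \<bar>y\<bar> else 0)"

definition TwoSum :: "(real \<Rightarrow> real) \<Rightarrow> real \<Rightarrow> real \<Rightarrow> real \<times> real" where
  "TwoSum rn a b =
     (let s = rn (a + b); a' = rn (s - b); b' = rn (s - a');
          da = rn (a - a'); db = rn (b - b'); t = rn (da + db) in (s, t))"

definition Fast2Sum :: "(real \<Rightarrow> real) \<Rightarrow> real \<Rightarrow> real \<Rightarrow> real \<times> real" where
  "Fast2Sum rn a b = (let s = rn (a + b); t = rn (b - rn (s - a)) in (s, t))"

definition sloppy_add :: "(real \<Rightarrow> real) \<Rightarrow> real \<Rightarrow> real \<Rightarrow> real \<Rightarrow> real \<Rightarrow> real \<times> real" where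
  "sloppy_add rn xh xl yh yl =
     (let (sh, sl) = TwoSum rn xh yh; v = rn (xl + yl); w = rn (sl + v) in Fast2Sum rn sh w)"

definition rel_err :: "real \<times> real \<Rightarrow> real \<Rightarrow> real" where
  "rel_err z x = \<bar>fst z + snd z - x\<bar> / \<bar>x\<bar>"

definition consecutive_floats :: "nat \<Rightarrow> real \<Rightarrow> real \<Rightarrow> bool" where
  "consecutive_floats p a b \<longleftrightarrow> a \<in> Fp p \<and> b \<in> Fp p \<and> a \<noteq> b \<and>
     \<not> (\<exists>f \<in> Fp p. min a b < f \<and> f < max a b)"

end

theory Submission
  imports Defs
begin


definition pw :: "int \<Rightarrow> real" where "pw k = 2 powr (of_int k)"
definition mult :: "real \<Rightarrow> real \<Rightarrow> bool" where "mult g x \<longleftrightarrow> (\<exists>k::int. x = of_int k * g)"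

lemma pw_add: "pw (a + b) = pw a * pw b" by (simp add: pw_def powr_add)
lemma pw_pos[simp]: "pw k > 0" by (simp add: pw_def)
lemma pw_nz[simp]: "pw k \<noteq> 0" using pw_pos[of k] by linarith
lemma pw_abs[simp]: "\<bar>pw k\<bar> = pw k" using pw_pos[of k] by linarith
lemma pw_nat: "pw (int n) = 2 ^ n" by (simp add: pw_def powr_realpow)
lemma pw_0[simp]: "pw 0 = 1" by (simp add: pw_def)
lemma pw_1[simp]: "pw 1 = 2" by (simp add: pw_def)
lemma pw_le_iff[simp]: "pw a \<le> pw b \<longleftrightarrow> a \<le> b" by (simp add: pw_def)
lemma pw_less_iff[simp]: "pw a < pw b \<longleftrightarrow> a < b" by (simp add: pw_def)
lemma pw_succ: "pw (k + 1) = 2 * pw k" by (simp add: pw_add)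
lemma pw_pred: "pw (k - 1) = pw k / 2"
  using pw_succ[of "k - 1"] by simp
lemma pw_minus: "pw (- k) = 1 / pw k"
  by (simp add: pw_def powr_minus_divide)
lemma pw_diff: "pw (a - b) = pw a / pw b"
  using pw_add[of a "-b"] by (simp add: pw_minus)
lemma unit_round_pw: "unit_round p = pw (- int p)"
  by (simp add: unit_round_def pw_def)

lemma Fp_iff: "x \<in> Fp p \<longleftrightarrow> (\<exists>m e :: int. x = of_int m * pw e \<and> \<bar>m\<bar> < 2 ^ p)"
  by (simp add: Fp_def pw_def)

lemma Fp_0[simp]: "0 \<in> Fp p"
  unfolding Fp_iff by (rule exI[of _ 0], rule exI[of _ 0]) simp

lemma Fp_neg: "x \<in> Fp p \<Longrightarrow> - x \<in> Fp p"
  unfolding Fp_iff by (metis abs_minus_cancel mult_minus_left of_int_minus)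

lemma Fp_neg_iff[simp]: "- x \<in> Fp p \<longleftrightarrow> x \<in> Fp p"
  using Fp_neg[of x p] Fp_neg[of "-x" p] by auto

lemma Fp_abs[simp]: "\<bar>x\<bar> \<in> Fp p \<longleftrightarrow> x \<in> Fp p"
  by (cases "x \<ge> 0") auto

lemma Fp_pw: "p \<ge> 1 \<Longrightarrow> pw e \<in> Fp p"
  unfolding Fp_iff
  apply (rule exI[of _ 1], rule exI[of _ e])
  using one_less_power[of "2::int" p] by simp

lemma mult_pw_mono:
  assumes "j \<le> j'" "mult (pw j') x" shows "mult (pw j) x"
proof -
  obtain k where k: "x = of_int k * pw j'" using assms(2) mult_def by blast
  have "pw j' = 2 ^ nat (j' - j) * pw j"
    using pw_add[of "j' - j" j] pw_nat[of "nat (j' - j)"] assms(1) by simp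
  then have "x = of_int (k * 2 ^ nat (j' - j)) * pw j" using k by simp
  then show ?thesis unfolding mult_def by blast
qed

lemma mult_add: "mult g x \<Longrightarrow> mult g y \<Longrightarrow> mult g (x + y)"
  unfolding mult_def by (metis distrib_right of_int_add)
lemma mult_neg: "mult g x \<Longrightarrow> mult g (- x)"
  unfolding mult_def by (metis mult_minus_left of_int_minus)
lemma mult_diff: "mult g x \<Longrightarrow> mult g y \<Longrightarrow> mult g (x - y)"
  using mult_add[of g x "-y"] mult_neg[of g y] by simp
lemma mult_0[simp]: "mult g 0" unfolding mult_def by (rule exI[of _ 0]) simp

lemma grid_Fp:
  assumes "p \<ge> 1" "mult (pw j) x" "\<bar>x\<bar> \<le> pw (j + int p)"
  shows "x \<in> Fp p"
proof -
  obtain k where k: "x = of_int k * pw j" using assms(2) mult_def by blast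
  have pp: "pw (j + int p) = 2 ^ p * pw j" by (simp add: pw_add pw_nat)
  have "\<bar>of_int k\<bar> * pw j \<le> 2 ^ p * pw j" using assms(3) k pp by (simp add: abs_mult)
  then have "\<bar>real_of_int k\<bar> \<le> 2 ^ p" by simp
  then have kle: "\<bar>k\<bar> \<le> 2 ^ p"
    by (metis of_int_abs of_int_le_iff of_int_numeral of_int_power)
  show ?thesis
  proof (cases "\<bar>k\<bar> < 2 ^ p")
    case True then show ?thesis unfolding Fp_iff using k by blast
  next
    case False
    then have "\<bar>k\<bar> = 2 ^ p" using kle by simp
    then have "k = 2 ^ p \<or> k = - (2 ^ p)" by linarith
    then have "x = 1 * pw (j + int p) \<or> x = (-1) * pw (j + int p)"
      using k pp by auto
    moreover have "\<bar>1::int\<bar> < 2 ^ p" "\<bar>-1::int\<bar> < 2 ^ p" using assms(1)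
      by (simp_all add: one_less_power)
    ultimately show ?thesis unfolding Fp_iff by (metis of_int_1 of_int_minus)
  qed
qed

lemma Fp_norm:
  assumes "x \<in> Fp p" "x \<noteq> 0"
  shows "\<exists>e. pw e \<le> \<bar>x\<bar> \<and> \<bar>x\<bar> < pw (e + 1) \<and> mult (pw (e + 1 - int p)) x"
proof -
  define e where "e = \<lfloor>log 2 \<bar>x\<bar>\<rfloor>"
  have b: "pw e \<le> \<bar>x\<bar> \<and> \<bar>x\<bar> < pw (e + 1)"
    using floor_log_eq_powr_iff[of "\<bar>x\<bar>" 2 e] assms(2) unfolding e_def pw_def by simp
  obtain m f where mf: "x = of_int m * pw f" "\<bar>m\<bar> < 2 ^ p" using assms(1) Fp_iff by blast
  have "\<bar>real_of_int m\<bar> < 2 ^ p"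
    using mf(2) by (metis of_int_abs of_int_less_iff of_int_numeral of_int_power)
  then have "\<bar>x\<bar> < 2 ^ p * pw f" using mf(1) by (simp add: abs_mult)
  also have "\<dots> = pw (f + int p)" by (simp add: pw_add pw_nat)
  finally have "pw e < pw (f + int p)" using b by linarith
  then have "e + 1 - int p \<le> f" by simp
  moreover have "mult (pw f) x" using mf(1) mult_def by blast
  ultimately have "mult (pw (e + 1 - int p)) x" using mult_pw_mono by blast
  then show ?thesis using b by blast
qed

lemma Fp_mult_big:
  assumes "x \<in> Fp p" "pw e \<le> \<bar>x\<bar>"
  shows "mult (pw (e + 1 - int p)) x"
proof -
  have "x \<noteq> 0" using assms(2) pw_pos[of e] by (metis abs_zero not_less)
  then obtain e' where e': "pw e' \<le> \<bar>x\<bar>" "\<bar>x\<bar> < pw (e' + 1)" "mult (pw (e' + 1 - int p)) x"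
    using Fp_norm assms(1) by blast
  have "pw e < pw (e' + 1)" using e' assms(2) by linarith
  then have "e \<le> e'" by simp
  then show ?thesis using mult_pw_mono[OF _ e'(3)] by simp
qed

lemma Fp_double: "x \<in> Fp p \<Longrightarrow> 2 * x \<in> Fp p"
  unfolding Fp_iff
  by (metis (no_types, opaque_lifting) mult.assoc mult.left_commute pw_succ)

lemma Fp_half: "x \<in> Fp p \<Longrightarrow> x / 2 \<in> Fp p"
  unfolding Fp_iff
  by (metis (no_types, opaque_lifting) pw_pred times_divide_eq_right)



lemma rn_Fp: "is_RN p rn \<Longrightarrow> rn x \<in> Fp p"
  unfolding is_RN_def is_nearest_def by blast
lemma rn_near: "is_RN p rn \<Longrightarrow> g \<in> Fp p \<Longrightarrow> \<bar>rn x - x\<bar> \<le> \<bar>g - x\<bar>"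
  unfolding is_RN_def is_nearest_def by blast
lemma rn_id: "is_RN p rn \<Longrightarrow> x \<in> Fp p \<Longrightarrow> rn x = x"
  using rn_near[of p rn x x] by simp
lemma rn_le: "is_RN p rn \<Longrightarrow> f \<in> Fp p \<Longrightarrow> z \<le> f \<Longrightarrow> rn z \<le> f"
  using rn_near[of p rn f z] by linarith
lemma rn_ge: "is_RN p rn \<Longrightarrow> f \<in> Fp p \<Longrightarrow> f \<le> z \<Longrightarrow> f \<le> rn z"
  using rn_near[of p rn f z] by linarith

lemma rn_err_pw:
  assumes rn: "is_RN p rn" and p: "p \<ge> 1" and z: "\<bar>z\<bar> \<le> pw k"
  shows "\<bar>rn z - z\<bar> \<le> pw (k - 1 - int p)"
proof -
  define g where "g = pw (k - int p)"
  have gp: "g > 0" by (simp add: g_def)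
  have kg: "pw k = 2 ^ p * g" unfolding g_def using pw_add[of "k - int p" "int p"] by (simp add: pw_nat)
  define n where "n = \<lfloor>z / g + 1/2\<rfloor>"
  have n1: "of_int n \<le> z / g + 1/2" "z / g + 1/2 < of_int n + 1" unfolding n_def by linarith+
  have zg0: "\<bar>z\<bar> \<le> 2 ^ p * g" using z kg by simp
  have "\<bar>z / g\<bar> = \<bar>z\<bar> / g" using gp by simp
  also have "\<dots> \<le> 2 ^ p" using zg0 gp by (simp add: pos_divide_le_eq mult.commute)
  finally have zg: "\<bar>z / g\<bar> \<le> 2 ^ p" .
  have zg1: "z / g \<le> 2 ^ p" "- (2 ^ p) \<le> z / g" using abs_le_iff[THEN iffD1, OF zg] by auto
  have "real_of_int n < 2 ^ p + 1" using n1 zg1 by linarith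
  then have "real_of_int n < real_of_int (2 ^ p + 1)" by simp
  then have u1: "n < 2 ^ p + 1" by (simp only: of_int_less_iff)
  have "- (2 ^ p) - 1 < real_of_int n" using n1 zg1 by linarith
  then have "real_of_int (- (2 ^ p) - 1) < real_of_int n" by simp
  then have u2: "- (2 ^ p) - 1 < n" by (simp only: of_int_less_iff)
  have nb: "\<bar>n\<bar> \<le> 2 ^ p" using u1 u2 by linarith
  have "real_of_int \<bar>n\<bar> \<le> real_of_int (2 ^ p)" using nb by (simp only: of_int_le_iff)
  then have "\<bar>real_of_int n\<bar> \<le> 2 ^ p" by simp
  then have "\<bar>of_int n * g\<bar> \<le> pw (k - int p + int p)"
    using kg gp by (simp add: abs_mult)
  then have F: "of_int n * g \<in> Fp p" using grid_Fp[OF p, of "k - int p"] unfolding mult_def g_def by blast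
  have "\<bar>of_int n * g - z\<bar> \<le> g / 2"
  proof -
    have "\<bar>of_int n - z / g\<bar> \<le> 1/2" using n1 by linarith
    then have "\<bar>(of_int n - z / g) * g\<bar> \<le> 1/2 * g" using gp by (simp add: abs_mult)
    then show ?thesis using gp by (simp add: algebra_simps)
  qed
  moreover have "g / 2 = pw (k - 1 - int p)" unfolding g_def
    using pw_pred[of "k - int p"] by (simp add: algebra_simps)
  ultimately show ?thesis using rn_near[OF rn F, of z] by linarith
qed

lemma rn_err_rel:
  assumes rn: "is_RN p rn" and p: "p \<ge> 1"
  shows "\<bar>rn z - z\<bar> \<le> unit_round p * \<bar>z\<bar>"
proof (cases "z = 0")
  case True then show ?thesis using rn_id[OF rn Fp_0] by simp
next
  case False
  define k where "k = \<lceil>log 2 \<bar>z\<bar>\<rceil>"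
  have "\<bar>z\<bar> = 2 powr (log 2 \<bar>z\<bar>)" using False by simp
  also have "\<dots> \<le> pw k" unfolding pw_def k_def by simp
  finally have zk: "\<bar>z\<bar> \<le> pw k" .
  have "pw (k - 1) = 2 powr (of_int k - 1)" unfolding pw_def by simp
  also have "\<dots> \<le> 2 powr (log 2 \<bar>z\<bar>)" unfolding k_def by (intro powr_mono) linarith+
  also have "\<dots> = \<bar>z\<bar>" using False by simp
  finally have zk2: "pw (k - 1) \<le> \<bar>z\<bar>" .
  have "pw (k - 1 - int p) = unit_round p * pw (k - 1)"
    unfolding unit_round_pw using pw_add[of "- int p" "k - 1"] by (simp add: algebra_simps)
  also have "\<dots> \<le> unit_round p * \<bar>z\<bar>" using zk2 unfolding unit_round_pw by simp
  finally show ?thesis using rn_err_pw[OF rn p zk] by linarith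
qed

lemma rn_mult:
  assumes rn: "is_RN p rn" and p: "p \<ge> 1" and z: "mult (pw j) z"
  shows "mult (pw j) (rn z)"
proof (cases "\<bar>z\<bar> \<le> pw (j + int p)")
  case True
  then have "z \<in> Fp p" using grid_Fp[OF p z] by simp
  then show ?thesis using rn_id[OF rn] z by simp
next
  case False
  have F: "pw (j + int p) \<in> Fp p" "- pw (j + int p) \<in> Fp p" using Fp_pw[OF p] by auto
  have "pw (j + int p) \<le> \<bar>rn z\<bar>"
  proof (cases "z \<ge> 0")
    case True then show ?thesis using rn_ge[OF rn F(1), of z] False by simp
  next
    case False': False
    then show ?thesis using rn_le[OF rn F(2), of z] False by simp
  qed
  then have "mult (pw (j + int p + 1 - int p)) (rn z)" using Fp_mult_big[OF rn_Fp[OF rn]] by blast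
  then show ?thesis using mult_pw_mono[of j "j + int p + 1 - int p"] by simp
qed

lemma sterbenz0:
  assumes p: "p \<ge> 1" and F: "x \<in> Fp p" "y \<in> Fp p" and h: "0 \<le> y" "y \<le> x" "x \<le> 2 * y"
  shows "x - y \<in> Fp p"
proof (cases "y = 0")
  case True then show ?thesis using h by simp
next
  case False
  obtain e where e: "pw e \<le> \<bar>y\<bar>" "\<bar>y\<bar> < pw (e + 1)" "mult (pw (e + 1 - int p)) y"
    using Fp_norm[OF F(2) False] by blast
  have "mult (pw (e + 1 - int p)) x" using Fp_mult_big[OF F(1), of e] e h by simp
  then have m: "mult (pw (e + 1 - int p)) (x - y)" using mult_diff e(3) by blast
  have "\<bar>x - y\<bar> \<le> pw (e + 1 - int p + int p)" using e h by simp
  then show ?thesis using grid_Fp[OF p m] by simp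
qed

lemma sterbenz:
  assumes p: "p \<ge> 1" and F: "x \<in> Fp p" "y \<in> Fp p" and h: "x * y \<ge> 0" "\<bar>y\<bar> \<le> 2 * \<bar>x\<bar>" "\<bar>x\<bar> \<le> 2 * \<bar>y\<bar>"
  shows "x - y \<in> Fp p"
proof -
  consider "x \<ge> 0" "y \<ge> 0" | "x \<le> 0" "y \<le> 0" using h(1)
    by (metis zero_le_mult_iff)
  then show ?thesis
  proof cases
    case 1
    show ?thesis
    proof (cases "y \<le> x")
      case True then show ?thesis using sterbenz0[OF p F] 1 h by simp
    next
      case False
      then have "y - x \<in> Fp p" using sterbenz0[OF p F(2) F(1)] 1 h by simp
      then show ?thesis using Fp_neg by fastforce
    qed
  next
    case 2
    have F': "-x \<in> Fp p" "-y \<in> Fp p" using F by auto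
    show ?thesis
    proof (cases "y \<le> x")
      case True
      then have "-y - -x \<in> Fp p" using sterbenz0[OF p F'(2) F'(1)] 2 h by simp
      then show ?thesis by simp
    next
      case False
      then have "-x - -y \<in> Fp p" using sterbenz0[OF p F'(1) F'(2)] 2 h by simp
      then show ?thesis using Fp_neg by fastforce
    qed
  qed
qed

lemma err_Fp0:
  assumes rn: "is_RN p rn" and p: "p \<ge> 1" and F: "a \<in> Fp p" "b \<in> Fp p" and ab: "\<bar>b\<bar> \<le> \<bar>a\<bar>"
  shows "rn (a + b) - (a + b) \<in> Fp p"
proof (cases "b = 0")
  case True then show ?thesis using rn_id[OF rn F(1)] by simp
next
  case False
  obtain e where e: "pw e \<le> \<bar>b\<bar>" "\<bar>b\<bar> < pw (e + 1)" "mult (pw (e + 1 - int p)) b"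
    using Fp_norm[OF F(2) False] by blast
  have "mult (pw (e + 1 - int p)) a" using Fp_mult_big[OF F(1), of e] e ab by simp
  then have "mult (pw (e + 1 - int p)) (a + b)" using mult_add e(3) by blast
  then have "mult (pw (e + 1 - int p)) (rn (a + b) - (a + b))"
    using rn_mult[OF rn p] mult_diff by blast
  moreover have "\<bar>rn (a + b) - (a + b)\<bar> \<le> pw (e + 1 - int p + int p)"
    using rn_near[OF rn F(1), of "a + b"] e by simp
  ultimately show ?thesis using grid_Fp[OF p] by blast
qed

lemma err_Fp:
  assumes rn: "is_RN p rn" and p: "p \<ge> 1" and F: "a \<in> Fp p" "b \<in> Fp p"
  shows "rn (a + b) - (a + b) \<in> Fp p"
proof (cases "\<bar>b\<bar> \<le> \<bar>a\<bar>")
  case True then show ?thesis using err_Fp0[OF rn p F] by simp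
next
  case False then show ?thesis using err_Fp0[OF rn p F(2) F(1)] by (simp add: add.commute)
qed

lemma is_RN_neg: "is_RN p rn \<Longrightarrow> is_RN p (\<lambda>x. - rn (- x))"
  unfolding is_RN_def is_nearest_def
  by (metis Fp_neg_iff abs_minus_commute minus_diff_eq minus_minus diff_minus_eq_add add.commute)



lemma u_le: "p \<ge> 2 \<Longrightarrow> unit_round p \<le> 1/4"
proof -
  assume "p \<ge> 2"
  then have "pw (- int p) \<le> pw (-2)" by simp
  moreover have "pw (-2) = 1/4" using pw_minus[of 2] pw_nat[of 2] by simp
  ultimately show ?thesis unfolding unit_round_pw by simp
qed

lemma u_pos: "unit_round p > 0" unfolding unit_round_pw by simp

lemma f2s_sa_pos:
  assumes rn: "is_RN p rn" and p: "p \<ge> 1" and F: "a \<in> Fp p" "b \<in> Fp p"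
    and a: "a \<ge> 0" and ab: "\<bar>b\<bar> \<le> a"
  shows "rn (a + b) - a \<in> Fp p"
proof -
  consider "b \<ge> 0" | "b < 0" "- b \<ge> a / 2" | "b < 0" "- b < a / 2" by linarith
  then show ?thesis
  proof cases
    case 1
    have "a \<le> rn (a + b)" using rn_ge[OF rn F(1)] 1 by simp
    moreover have "rn (a + b) \<le> 2 * a" using rn_le[OF rn Fp_double[OF F(1)]] ab by simp
    ultimately show ?thesis using sterbenz0[OF p rn_Fp[OF rn] F(1)] a by simp
  next
    case 2
    have "a - (- b) \<in> Fp p" using sterbenz0[OF p F(1) Fp_neg[OF F(2)]] 2 ab by simp
    then have "rn (a + b) = a + b" using rn_id[OF rn] by simp
    then show ?thesis using F(2) by simp
  next
    case 3
    have "a / 2 \<le> rn (a + b)" using rn_ge[OF rn Fp_half[OF F(1)]] 3 by simp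
    moreover have "rn (a + b) \<le> a" using rn_le[OF rn F(1)] 3 by simp
    ultimately have "a - rn (a + b) \<in> Fp p" using sterbenz0[OF p F(1) rn_Fp[OF rn]] a by simp
    then show ?thesis by (metis Fp_neg_iff minus_diff_eq)
  qed
qed

lemma f2s_sa:
  assumes rn: "is_RN p rn" and p: "p \<ge> 1" and F: "a \<in> Fp p" "b \<in> Fp p"
    and ab: "\<bar>b\<bar> \<le> \<bar>a\<bar>"
  shows "rn (a + b) - a \<in> Fp p"
proof (cases "a \<ge> 0")
  case True then show ?thesis using f2s_sa_pos[OF rn p F] ab by simp
next
  case False
  have "(\<lambda>x. - rn (- x)) (- a + - b) - (- a) \<in> Fp p"
    using f2s_sa_pos[OF is_RN_neg[OF rn] p Fp_neg[OF F(1)] Fp_neg[OF F(2)]] False ab by simp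
  then have "- (rn (a + b) - a) \<in> Fp p" by (simp add: algebra_simps)
  then show ?thesis using Fp_neg_iff by blast
qed

lemma fast2sum_exact:
  assumes rn: "is_RN p rn" and p: "p \<ge> 1" and F: "a \<in> Fp p" "b \<in> Fp p"
    and ab: "\<bar>b\<bar> \<le> \<bar>a\<bar>"
  shows "fst (Fast2Sum rn a b) = rn (a + b)"
    "fst (Fast2Sum rn a b) + snd (Fast2Sum rn a b) = a + b"
proof -
  have z: "rn (rn (a + b) - a) = rn (a + b) - a" using rn_id[OF rn f2s_sa[OF rn p F ab]] .
  have "- (rn (a + b) - (a + b)) \<in> Fp p" using err_Fp[OF rn p F] Fp_neg by blast
  then have t: "rn (b - (rn (a + b) - a)) = b - (rn (a + b) - a)"
    using rn_id[OF rn] by (simp add: algebra_simps)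
  show "fst (Fast2Sum rn a b) = rn (a + b)" unfolding Fast2Sum_def Let_def by simp
  show "fst (Fast2Sum rn a b) + snd (Fast2Sum rn a b) = a + b"
    unfolding Fast2Sum_def Let_def using z t by simp
qed

lemma twosum_red:
  assumes rn: "is_RN p rn" and p: "p \<ge> 1" and F: "a \<in> Fp p" "b \<in> Fp p"
    and h1: "rn (a + b) - rn (rn (a + b) - b) \<in> Fp p"
    and h2: "a - rn (rn (a + b) - b) \<in> Fp p"
  shows "TwoSum rn a b = (rn (a + b), a + b - rn (a + b))"
proof -
  define s where "s = rn (a + b)"
  define a' where "a' = rn (s - b)"
  have sF: "s \<in> Fp p" unfolding s_def using rn_Fp[OF rn] .
  have b': "rn (s - a') = s - a'" using rn_id[OF rn] h1 unfolding s_def a'_def by simp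
  have da: "rn (a - a') = a - a'" using rn_id[OF rn] h2 unfolding s_def a'_def by simp
  have "rn (s + - b) - (s + - b) \<in> Fp p" using err_Fp[OF rn p sF Fp_neg[OF F(2)]] .
  then have "b - (s - a') \<in> Fp p" unfolding a'_def by (simp add: algebra_simps)
  then have db: "rn (b - (s - a')) = b - (s - a')" using rn_id[OF rn] by simp
  have "- (rn (a + b) - (a + b)) \<in> Fp p" using err_Fp[OF rn p F] Fp_neg by blast
  then have "a - a' + (b - (s - a')) \<in> Fp p" unfolding s_def by (simp add: algebra_simps)
  then have t: "rn (a - a' + (b - (s - a'))) = a + b - s" using rn_id[OF rn] by simp
  show ?thesis unfolding TwoSum_def Let_def
    using b' da db t unfolding s_def[symmetric] a'_def[symmetric] by simp
qed

lemma twosum_exact_sum: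
  assumes rn: "is_RN p rn" and p: "p \<ge> 1" and F: "a \<in> Fp p" "b \<in> Fp p" "a + b \<in> Fp p"
  shows "TwoSum rn a b = (a + b, 0)"
proof -
  have s: "rn (a + b) = a + b" using rn_id[OF rn F(3)] .
  have "rn (rn (a + b) - b) = a" using s rn_id[OF rn F(1)] by simp
  then have "TwoSum rn a b = (rn (a + b), a + b - rn (a + b))"
    using twosum_red[OF rn p F(1,2)] s F by simp
  then show ?thesis using s by simp
qed

lemma twosum_A:
  assumes rn: "is_RN p rn" and p: "p \<ge> 2" and F: "a \<in> Fp p" "b \<in> Fp p"
    and ab: "a > 0" "b < 0" "- b \<le> a / 2"
  shows "TwoSum rn a b = (rn (a + b), a + b - rn (a + b))"
proof -
  have p1: "p \<ge> 1" using p by simp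
  define s where "s = rn (a + b)"
  define a' where "a' = rn (s - b)"
  define err where "err = s - (a + b)"
  have s1: "a / 2 \<le> s" unfolding s_def using rn_ge[OF rn Fp_half[OF F(1)]] ab by simp
  have s2: "s \<le> a" unfolding s_def using rn_le[OF rn F(1)] ab by simp
  have "\<bar>err\<bar> \<le> unit_round p * \<bar>a + b\<bar>" unfolding err_def s_def using rn_err_rel[OF rn p1] .
  also have "\<dots> \<le> 1/4 * a" using u_le[OF p] u_pos[of p] ab
    by (intro mult_mono) (auto simp: abs_le_iff)
  finally have e1: "\<bar>err\<bar> \<le> a / 4" by simp
  have "\<bar>a' - (a + err)\<bar> \<le> \<bar>a - (a + err)\<bar>"
    using rn_near[OF rn F(1), of "s - b"] unfolding a'_def err_def by (simp add: algebra_simps)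
  then have a'1: "\<bar>a' - (a + err)\<bar> \<le> \<bar>err\<bar>" by simp
  then have a'b: "a / 2 \<le> a'" "a' \<le> 3 * a / 2" using e1 by (simp_all add: abs_le_iff) linarith+
  have a'F: "a' \<in> Fp p" unfolding a'_def using rn_Fp[OF rn] .
  have sF: "s \<in> Fp p" unfolding s_def using rn_Fp[OF rn] .
  have h2: "a - a' \<in> Fp p"
    using sterbenz[OF p1 F(1) a'F] ab a'b by simp
  have "a' \<le> 2 * s"
  proof (cases "err \<ge> 0")
    case True
    then have "a' \<le> a + 2 * err" using a'1 by (simp add: abs_le_iff)
    then show ?thesis using ab err_def by linarith
  next
    case False
    then have "a' \<le> a" using a'1 by (simp add: abs_le_iff)
    then show ?thesis using s1 by linarith
  qed
  then have h1: "s - a' \<in> Fp p"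
    using sterbenz[OF p1 sF a'F] s1 s2 a'b ab by simp
  show ?thesis using twosum_red[OF rn p1 F] h1 h2 unfolding s_def a'_def by simp
qed

lemma twosum_B:
  assumes rn: "is_RN p rn" and p: "p \<ge> 1" and F: "a \<in> Fp p" "b \<in> Fp p"
    and ab: "a > 0" "b < 0" "a \<le> - b / 2"
  shows "TwoSum rn a b = (rn (a + b), a + b - rn (a + b))"
proof -
  define s where "s = rn (a + b)"
  have sF: "s \<in> Fp p" unfolding s_def using rn_Fp[OF rn] .
  have s1: "b \<le> s" unfolding s_def using rn_ge[OF rn F(2)] ab by simp
  have s2: "s \<le> b / 2" unfolding s_def using rn_le[OF rn Fp_half[OF F(2)]] ab by simp
  have "s - b \<in> Fp p" using sterbenz[OF p sF F(2)] s1 s2 ab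
    by (simp add: mult_nonpos_nonpos)
  then have a': "rn (s - b) = s - b" using rn_id[OF rn] by simp
  have h1: "s - rn (s - b) \<in> Fp p" using a' F(2) by simp
  have "- (rn (a + b) - (a + b)) \<in> Fp p" using err_Fp[OF rn p F] Fp_neg by blast
  moreover have "a - rn (s - b) = - (rn (a + b) - (a + b))" using a' unfolding s_def by simp
  ultimately have h2: "a - rn (s - b) \<in> Fp p" by metis
  show ?thesis using twosum_red[OF rn p F] h1 h2 unfolding s_def by simp
qed

lemma twosum_neg:
  "TwoSum (\<lambda>x. - rn (- x)) (- a) (- b) = (- fst (TwoSum rn a b), - snd (TwoSum rn a b))"
  unfolding TwoSum_def Let_def by (simp add: algebra_simps)

lemma fast2sum_neg:
  "Fast2Sum (\<lambda>x. - rn (- x)) (- a) (- b) = (- fst (Fast2Sum rn a b), - snd (Fast2Sum rn a b))"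
  unfolding Fast2Sum_def Let_def by (simp add: algebra_simps)

lemma sloppy_neg:
  "sloppy_add (\<lambda>x. - rn (- x)) (- xh) (- xl) (- yh) (- yl)
    = (- fst (sloppy_add rn xh xl yh yl), - snd (sloppy_add rn xh xl yh yl))"
proof -
  obtain sh sl where st: "TwoSum rn xh yh = (sh, sl)" by fastforce
  have st': "TwoSum (\<lambda>x. - rn (- x)) (- xh) (- yh) = (- sh, - sl)" using twosum_neg[of rn xh yh] st by simp
  have "(\<lambda>x. - rn (- x)) (- sl + (\<lambda>x. - rn (- x)) (- xl + - yl)) = - rn (sl + rn (xl + yl))"
    by (simp add: algebra_simps)
  then show ?thesis unfolding sloppy_add_def st st' Let_def
    using fast2sum_neg[of rn sh "rn (sl + rn (xl + yl))"] by (simp add: algebra_simps)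
qed



lemma rn_abs_le:
  assumes rn: "is_RN p rn" and F: "f \<in> Fp p" and z: "\<bar>z\<bar> \<le> f"
  shows "\<bar>rn z\<bar> \<le> f"
  using rn_le[OF rn F, of z] rn_ge[OF rn Fp_neg[OF F], of z] z by (simp add: abs_le_iff)

lemma rn_abs_ge:
  assumes rn: "is_RN p rn" and F: "f \<in> Fp p" and z: "f \<le> \<bar>z\<bar>"
  shows "f \<le> \<bar>rn z\<bar>"
proof (cases "z \<ge> 0")
  case True then show ?thesis using rn_ge[OF rn F, of z] z by simp
next
  case False then show ?thesis using rn_le[OF rn Fp_neg[OF F], of z] z by simp
qed

lemma mult_gt:
  assumes "mult g x" "g > 0" "x > of_int c * g"
  shows "x \<ge> of_int (c + 1) * g"
proof -
  obtain k where k: "x = of_int k * g" using assms(1) mult_def by blast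
  then have "of_int c < (of_int k :: real)" using assms(2,3) by simp
  then have "c + 1 \<le> k" by linarith
  then have "(of_int (c + 1) :: real) \<le> of_int k" by linarith
  then show ?thesis using k assms(2) by (simp add: mult_right_mono)
qed

lemma mult_small:
  assumes "mult g x" "g > 0" "\<bar>x\<bar> \<le> g"
  shows "x = 0 \<or> \<bar>x\<bar> = g"
proof -
  obtain k where k: "x = of_int k * g" using assms(1) mult_def by blast
  then have "\<bar>of_int k\<bar> * g \<le> 1 * g" using assms(2,3) by (simp add: abs_mult)
  then have "\<bar>(of_int k :: real)\<bar> \<le> 1" using assms(2) by (simp only: mult_le_cancel_right_pos)
  then have "\<bar>k\<bar> \<le> 1" by linarith
  then have "k = 0 \<or> k = 1 \<or> k = -1" by linarith
  then show ?thesis using k assms(2) by auto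
qed

lemma low_bound:
  assumes rn: "is_RN p rn" and p: "p \<ge> 1" and F: "h \<in> Fp p" and h0: "h \<noteq> 0"
    and r: "rn (h + l) = h" and hk: "\<bar>h\<bar> < pw k"
  shows "\<bar>l\<bar> \<le> pw (k - 1 - int p)"
proof -
  obtain e where e: "pw e \<le> \<bar>h\<bar>" "\<bar>h\<bar> < pw (e + 1)" "mult (pw (e + 1 - int p)) h"
    using Fp_norm[OF F h0] by blast
  define g where "g = pw (e + 1 - int p)"
  have gp: "g > 0" unfolding g_def by simp
  obtain n where n: "h = of_int n * g" using e(3) unfolding mult_def g_def by blast
  have eg: "pw (e + 1) = 2 ^ p * g" unfolding g_def using pw_add[of "e + 1 - int p" "int p"]
    by (simp add: pw_nat)
  have "\<bar>of_int n\<bar> * g < 2 ^ p * g" using e(2) n eg gp by (simp add: abs_mult)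
  then have "\<bar>(of_int n :: real)\<bar> < 2 ^ p" using gp by (simp only: mult_less_cancel_right_pos)
  then have "real_of_int \<bar>n\<bar> < real_of_int (2 ^ p)" by simp
  then have "\<bar>n\<bar> < 2 ^ p" by (simp only: of_int_less_iff)
  then have "\<bar>n\<bar> + 1 \<le> 2 ^ p" by linarith
  then have "real_of_int (\<bar>n\<bar> + 1) \<le> real_of_int (2 ^ p)" by (simp only: of_int_le_iff)
  then have n2: "\<bar>(of_int n :: real)\<bar> + 1 \<le> 2 ^ p" by simp
  have b1: "\<bar>h + g\<bar> \<le> pw (e + 1 - int p + int p)" and b2: "\<bar>h - g\<bar> \<le> pw (e + 1 - int p + int p)"
  proof -
    have "\<bar>h + g\<bar> \<le> \<bar>h\<bar> + g" "\<bar>h - g\<bar> \<le> \<bar>h\<bar> + g" using gp by linarith+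
    moreover have "\<bar>h\<bar> + g = (\<bar>of_int n\<bar> + 1) * g" using n gp by (simp add: abs_mult algebra_simps)
    moreover have "(\<bar>(of_int n :: real)\<bar> + 1) * g \<le> 2 ^ p * g" using n2 gp by (simp only: mult_le_cancel_right_pos)
    ultimately show "\<bar>h + g\<bar> \<le> pw (e + 1 - int p + int p)" "\<bar>h - g\<bar> \<le> pw (e + 1 - int p + int p)"
      using eg by simp_all
  qed
  have m1: "mult (pw (e + 1 - int p)) (h + g)" "mult (pw (e + 1 - int p)) (h - g)"
    using mult_add[OF e(3)] mult_diff[OF e(3)] unfolding g_def mult_def
    by (metis mult_1 of_int_1)+
  have F1: "h + g \<in> Fp p" "h - g \<in> Fp p" using grid_Fp[OF p m1(1) b1] grid_Fp[OF p m1(2) b2] by auto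
  have "\<bar>l\<bar> \<le> \<bar>g - l\<bar>" using rn_near[OF rn F1(1), of "h + l"] r by simp
  moreover have "\<bar>l\<bar> \<le> \<bar>g + l\<bar>" using rn_near[OF rn F1(2), of "h + l"] r by (simp add: abs_minus_commute)
  ultimately have "\<bar>l\<bar> \<le> g / 2" using gp by (auto simp: abs_if split: if_splits)
  moreover have "g / 2 = pw (e - int p)" unfolding g_def using pw_pred[of "e + 1 - int p"] by simp
  moreover have "pw e < pw k" using e(1) hk by linarith
  then have "e + 1 \<le> k" by simp
  then have "pw (e - int p) \<le> pw (k - 1 - int p)" by simp
  ultimately show ?thesis by linarith
qed

lemma low_bound_pow:
  assumes rn: "is_RN p rn" and p: "p \<ge> 1" and r: "rn (pw k + l) = pw k"
  shows "l \<ge> - pw (k - 1 - int p)"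
proof -
  define g where "g = pw (k - int p)"
  have gp: "g > 0" unfolding g_def by simp
  have kg: "pw k = 2 ^ p * g" unfolding g_def using pw_add[of "k - int p" "int p"] by (simp add: pw_nat)
  have m: "mult g (pw k - g)" unfolding mult_def kg
    by (rule exI[of _ "2 ^ p - 1"]) (simp add: algebra_simps)
  have "\<bar>pw k - g\<bar> \<le> pw (k - int p + int p)" using kg gp
    by (simp add: abs_le_iff)
  then have F: "pw k - g \<in> Fp p" using grid_Fp[OF p, of "k - int p"] m unfolding g_def by blast
  have "\<bar>l\<bar> \<le> \<bar>g + l\<bar>" using rn_near[OF rn F, of "pw k + l"] r by (simp add: abs_minus_commute)
  then have "l \<ge> - g / 2" using gp by (auto simp: abs_if split: if_splits)
  moreover have "g / 2 = pw (k - 1 - int p)" unfolding g_def using pw_pred[of "k - int p"] by (simp add: algebra_simps)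
  ultimately show ?thesis by linarith
qed

lemma low_bound_pow_neg:
  assumes rn: "is_RN p rn" and p: "p \<ge> 1" and r: "rn (- pw k + l) = - pw k"
  shows "l \<le> pw (k - 1 - int p)"
proof -
  have "(\<lambda>x. - rn (- x)) (pw k + - l) = pw k" using r by simp
  then have "- l \<ge> - pw (k - 1 - int p)" using low_bound_pow[OF is_RN_neg[OF rn] p] by blast
  then show ?thesis by simp
qed



lemma pw_eq: "a = b + c \<Longrightarrow> pw a = pw b * pw c" by (simp add: pw_add)

lemma u_le8: "p \<ge> 3 \<Longrightarrow> unit_round p \<le> 1/8"
proof -
  assume "p \<ge> 3"
  then have "pw (- int p) \<le> pw (-3)" by simp
  moreover have "pw (-3) = 1/8" using pw_minus[of 3] pw_nat[of 3] by simp
  ultimately show ?thesis unfolding unit_round_pw by simp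
qed

lemma fin:
  fixes E SL A u k l m :: real
  assumes A: "A > 0" and u: "u > 0" "u \<le> 1/8" and E: "\<bar>E\<bar> \<le> k * (u * (u * A))"
    and SL: "\<bar>SL\<bar> \<ge> l * A - m * (u * A)" and c: "k * (1 - 3 * u) \<le> 3 * (l - m * u)" and k: "k \<ge> 0"
  shows "\<bar>E\<bar> * (1 - 3 * u) \<le> 3 * u^2 * \<bar>SL\<bar>"
proof -
  have "\<bar>E\<bar> * (1 - 3 * u) \<le> (k * (u * (u * A))) * (1 - 3 * u)"
    using E u by (intro mult_right_mono) auto
  also have "\<dots> = (u * u * A) * (k * (1 - 3 * u))" by (simp add: algebra_simps)
  also have "\<dots> \<le> (u * u * A) * (3 * (l - m * u))" using c u A by (intro mult_left_mono) auto
  also have "\<dots> = 3 * u^2 * (l * A - m * (u * A))" by (simp add: power2_eq_square algebra_simps)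
  also have "\<dots> \<le> 3 * u^2 * \<bar>SL\<bar>" using SL by (intro mult_left_mono) auto
  finally show ?thesis .
qed

definition concl1 :: "nat \<Rightarrow> (real \<Rightarrow> real) \<Rightarrow> real \<Rightarrow> real \<Rightarrow> bool" where
  "concl1 p rn S L \<longleftrightarrow>
    \<bar>rn S + rn (S - rn S + rn L) - (S + L)\<bar> * (1 - 3 * unit_round p) \<le> 3 * unit_round p ^ 2 * \<bar>S + L\<bar>
    \<and> \<bar>rn (S - rn S + rn L)\<bar> \<le> \<bar>rn S\<bar> \<and> S + L \<noteq> 0"

lemma case1:
  assumes rn: "is_RN p rn" and p: "p \<ge> 3" and A: "A = pw e" and U: "U = pw (e - int p)"
    and S: "A \<le> \<bar>S\<bar>" "\<bar>S\<bar> \<le> 2 * A" and L: "\<bar>L\<bar> \<le> 3/2 * U"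
  shows "concl1 p rn S L"
proof -
  define u where "u = unit_round p"
  have p1: "p \<ge> 1" using p by simp
  have u8: "u \<le> 1/8" "u > 0" unfolding u_def using u_le8[OF p] u_pos by auto
  have UA: "U = u * A" unfolding U A u_def unit_round_pw using pw_eq[of "e - int p" "- int p" e] by simp
  have Ap: "A > 0" using A by simp
  have Up: "U > 0" using U by simp
  have uU: "u * U \<le> U / 8" using u8 Up by simp
  define sh where "sh = rn S"
  define sl where "sl = S - sh"
  define v where "v = rn L"
  define w where "w = rn (sl + v)"
  have "\<bar>L\<bar> \<le> pw (e - int p + 1)" using L UA Ap u8 pw_eq[of "e - int p + 1" "e - int p" 1] U by simp
  then have "\<bar>v - L\<bar> \<le> pw (e - int p + 1 - 1 - int p)" unfolding v_def using rn_err_pw[OF rn p1] by blast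
  also have "\<dots> = u * U" unfolding U u_def unit_round_pw using pw_eq[of "e - int p + 1 - 1 - int p" "- int p" "e - int p"] by simp
  finally have d1: "\<bar>v - L\<bar> \<le> u * U" .
  have "\<bar>S\<bar> \<le> pw (e + 1)" using S A pw_succ[of e] by simp
  then have "\<bar>sh - S\<bar> \<le> pw (e + 1 - 1 - int p)" unfolding sh_def using rn_err_pw[OF rn p1] by blast
  then have dsl: "\<bar>sl\<bar> \<le> U" unfolding sl_def U by (simp add: abs_minus_commute)
  have "\<bar>sl + v\<bar> \<le> \<bar>sl\<bar> + \<bar>L\<bar> + \<bar>v - L\<bar>" by linarith
  also have "\<dots> \<le> 4 * U" using dsl L d1 uU by linarith
  also have "\<dots> = pw (e - int p + 2)" using U pw_eq[of "e - int p + 2" "e - int p" 2] pw_nat[of 2] by simp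
  finally have slv: "\<bar>sl + v\<bar> \<le> pw (e - int p + 2)" .
  then have "\<bar>w - (sl + v)\<bar> \<le> pw (e - int p + 2 - 1 - int p)" unfolding w_def using rn_err_pw[OF rn p1] by blast
  also have "\<dots> = 2 * (u * U)" unfolding U u_def unit_round_pw
    using pw_eq[of "e - int p + 2 - 1 - int p" "- int p" "e - int p + 1"] pw_succ[of "e - int p"] by simp
  finally have d2: "\<bar>w - (sl + v)\<bar> \<le> 2 * (u * U)" .
  have Eeq: "sh + w - (S + L) = (w - (sl + v)) + (v - L)" unfolding sl_def by simp
  have E: "\<bar>sh + w - (S + L)\<bar> \<le> 3 * (u * (u * A))" using Eeq d1 d2 UA by simp
  have SL: "\<bar>S + L\<bar> \<ge> 1 * A - 3/2 * (u * A)" using S L UA by simp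
  have R: "\<bar>sh + w - (S + L)\<bar> * (1 - 3 * u) \<le> 3 * u^2 * \<bar>S + L\<bar>"
    by (rule fin[OF Ap u8(2) u8(1) E SL]) (use u8 in simp_all)
  have "\<bar>w\<bar> \<le> pw (e - int p + 2)" unfolding w_def using rn_abs_le[OF rn Fp_pw[OF p1] slv] .
  also have "\<dots> = 4 * (u * A)" using U UA pw_eq[of "e - int p + 2" "e - int p" 2] pw_nat[of 2] by simp
  also have "\<dots> \<le> A" using u8 Ap by simp
  also have "A \<le> \<bar>sh\<bar>" unfolding sh_def using rn_abs_ge[OF rn Fp_pw[OF p1]] S A by blast
  finally have W: "\<bar>w\<bar> \<le> \<bar>sh\<bar>" .
  have "u * A \<le> A / 8" using u8 Ap by simp
  then have "S + L \<noteq> 0" using SL Ap by auto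
  then show ?thesis unfolding concl1_def using R W
    unfolding sh_def sl_def v_def w_def u_def by simp
qed


lemma case_prelude:
  assumes p: "p \<ge> 3" and A: "A = pw e" and U: "U = pw (e - int p)"
  shows "U = unit_round p * A" "pw (e - int p + 1) = 2 * U" "pw (e - int p - 1) = U / 2"
    "pw (e - int p + 1 - 1 - int p) = unit_round p * U"
    "pw (e - int p - 1 - int p) = unit_round p * U / 2"
    "pw (e - 1) = A / 2" "pw (e - 1 - int p) = U / 2"
proof -
  show UA: "U = unit_round p * A" unfolding U A unit_round_pw using pw_eq[of "e - int p" "- int p" e] by simp
  show "pw (e - int p + 1) = 2 * U" using U pw_succ by simp
  show "pw (e - int p - 1) = U / 2" using U pw_pred by simp
  show "pw (e - int p + 1 - 1 - int p) = unit_round p * U" unfolding U unit_round_pw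
    using pw_eq[of "e - int p + 1 - 1 - int p" "- int p" "e - int p"] by simp
  show "pw (e - int p - 1 - int p) = unit_round p * U / 2" unfolding U unit_round_pw
    using pw_eq[of "e - int p - 1 - int p" "- int p" "e - int p - 1"] pw_pred[of "e - int p"] by simp
  show "pw (e - 1) = A / 2" using A pw_pred by simp
  show "pw (e - 1 - int p) = U / 2" using U pw_pred[of "e - int p"] by (simp add: algebra_simps)
qed

lemma case2:
  assumes rn: "is_RN p rn" and p: "p \<ge> 3" and A: "A = pw e" and U: "U = pw (e - int p)"
    and S: "A / 2 \<le> \<bar>S\<bar>" "\<bar>S\<bar> \<le> A" "mult U S" and L: "\<bar>L\<bar> \<le> 3/2 * U"
  shows "concl1 p rn S L"
proof -
  define u where "u = unit_round p"
  have p1: "p \<ge> 1" using p by simp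
  have u8: "u \<le> 1/8" "u > 0" unfolding u_def using u_le8[OF p] u_pos by auto
  note pf = case_prelude[OF p A U, folded u_def]
  have Ap: "A > 0" using A by simp
  have Up: "U > 0" using U by simp
  have SF: "S \<in> Fp p" using grid_Fp[OF p1, of "e - int p" S] S U A by simp
  have sh: "rn S = S" using rn_id[OF rn SF] .
  define v where "v = rn L"
  have vF: "v \<in> Fp p" unfolding v_def using rn_Fp[OF rn] .
  have w: "rn (S - rn S + rn L) = v" using sh rn_id[OF rn vF] unfolding v_def by simp
  have Lb: "\<bar>L\<bar> \<le> pw (e - int p + 1)" using L pf Up by simp
  then have d1: "\<bar>v - L\<bar> \<le> u * U" unfolding v_def using rn_err_pw[OF rn p1] pf by metis
  have E: "\<bar>S + v - (S + L)\<bar> \<le> 1 * (u * (u * A))" using d1 pf by simp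
  have SL: "\<bar>S + L\<bar> \<ge> 1/2 * A - 3/2 * (u * A)" using S L pf by simp
  have R: "\<bar>S + v - (S + L)\<bar> * (1 - 3 * u) \<le> 3 * u^2 * \<bar>S + L\<bar>"
    by (rule fin[OF Ap u8(2) u8(1) E SL]) (use u8 in simp_all)
  have "\<bar>v\<bar> \<le> pw (e - int p + 1)" unfolding v_def using rn_abs_le[OF rn Fp_pw[OF p1] Lb] .
  also have "\<dots> = 2 * (u * A)" using pf by simp
  also have "\<dots> \<le> A / 2" using u8 Ap by simp
  finally have W: "\<bar>v\<bar> \<le> \<bar>S\<bar>" using S by linarith
  have "u * A \<le> A / 8" using u8 Ap by simp
  then have "S + L \<noteq> 0" using SL Ap by auto
  then show ?thesis unfolding concl1_def using R W w sh unfolding u_def by simp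
qed

lemma case4:
  assumes rn: "is_RN p rn" and p: "p \<ge> 3" and A: "A = pw e" and U: "U = pw (e - int p)"
    and S: "3/4 * A \<le> \<bar>S\<bar>" "\<bar>S\<bar> \<le> A" and L: "\<bar>L\<bar> \<le> 9/8 * U"
  shows "concl1 p rn S L"
proof -
  define u where "u = unit_round p"
  have p1: "p \<ge> 1" using p by simp
  have u8: "u \<le> 1/8" "u > 0" unfolding u_def using u_le8[OF p] u_pos by auto
  note pf = case_prelude[OF p A U, folded u_def]
  have Ap: "A > 0" using A by simp
  have Up: "U > 0" using U by simp
  have uU: "u * U \<le> U / 8" using u8 Up by simp
  define sh where "sh = rn S"
  define sl where "sl = S - sh"
  define v where "v = rn L"
  define w where "w = rn (sl + v)"
  have "\<bar>L\<bar> \<le> pw (e - int p + 1)" using L pf Up by simp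
  then have d1: "\<bar>v - L\<bar> \<le> u * U" unfolding v_def using rn_err_pw[OF rn p1] pf by metis
  have "\<bar>sh - S\<bar> \<le> pw (e - 1 - int p)" unfolding sh_def using rn_err_pw[OF rn p1] S A by blast
  then have dsl: "\<bar>sl\<bar> \<le> U / 2" unfolding sl_def using pf by (simp add: abs_minus_commute)
  have "\<bar>sl + v\<bar> \<le> \<bar>sl\<bar> + \<bar>L\<bar> + \<bar>v - L\<bar>" by linarith
  also have "\<dots> \<le> 2 * U" using dsl L d1 uU by linarith
  finally have slv: "\<bar>sl + v\<bar> \<le> pw (e - int p + 1)" using pf by simp
  then have d2: "\<bar>w - (sl + v)\<bar> \<le> u * U" unfolding w_def using rn_err_pw[OF rn p1] pf by metis
  have Eeq: "sh + w - (S + L) = (w - (sl + v)) + (v - L)" unfolding sl_def by simp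
  have E: "\<bar>sh + w - (S + L)\<bar> \<le> 2 * (u * (u * A))" using Eeq d1 d2 pf by simp
  have SL: "\<bar>S + L\<bar> \<ge> 3/4 * A - 9/8 * (u * A)" using S L pf by simp
  have R: "\<bar>sh + w - (S + L)\<bar> * (1 - 3 * u) \<le> 3 * u^2 * \<bar>S + L\<bar>"
    by (rule fin[OF Ap u8(2) u8(1) E SL]) (use u8 in simp_all)
  have "\<bar>w\<bar> \<le> pw (e - int p + 1)" unfolding w_def using rn_abs_le[OF rn Fp_pw[OF p1] slv] .
  also have "\<dots> = 2 * (u * A)" using pf by simp
  also have "\<dots> \<le> A / 2" using u8 Ap by simp
  also have "A / 2 \<le> \<bar>sh\<bar>" unfolding sh_def using rn_abs_ge[OF rn Fp_pw[OF p1], of "e - 1" S] S pf Ap by simp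
  finally have W: "\<bar>w\<bar> \<le> \<bar>sh\<bar>" .
  have "u * A \<le> A / 8" using u8 Ap by simp
  then have "S + L \<noteq> 0" using SL Ap by auto
  then show ?thesis unfolding concl1_def using R W
    unfolding sh_def sl_def v_def w_def u_def by simp
qed


lemma case3:
  assumes rn: "is_RN p rn" and p: "p \<ge> 3" and A: "A = pw e" and U: "U = pw (e - int p)"
    and S: "A / 2 \<le> \<bar>S\<bar>" "\<bar>S\<bar> \<le> A" "mult (pw (e - int p - 1)) S" and L: "\<bar>L\<bar> \<le> 5/4 * U"
  shows "concl1 p rn S L"
proof -
  define u where "u = unit_round p"
  have p1: "p \<ge> 1" using p by simp
  have u8: "u \<le> 1/8" "u > 0" unfolding u_def using u_le8[OF p] u_pos by auto
  note pf = case_prelude[OF p A U, folded u_def]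
  have Ap: "A > 0" using A by simp
  have Up: "U > 0" using U by simp
  have uU: "u * U \<le> U / 8" using u8 Up by simp
  define sh where "sh = rn S"
  define sl where "sl = S - sh"
  define v where "v = rn L"
  define w where "w = rn (sl + v)"
  have vF: "v \<in> Fp p" unfolding v_def using rn_Fp[OF rn] .
  have "\<bar>L\<bar> \<le> pw (e - int p + 1)" using L pf Up by simp
  then have d1: "\<bar>v - L\<bar> \<le> u * U" unfolding v_def using rn_err_pw[OF rn p1] pf by metis
  have "\<bar>sh - S\<bar> \<le> pw (e - 1 - int p)" unfolding sh_def using rn_err_pw[OF rn p1] S A by blast
  then have dsl: "\<bar>sl\<bar> \<le> U / 2" unfolding sl_def using pf by (simp add: abs_minus_commute)
  have msl: "mult (pw (e - int p - 1)) sl" unfolding sl_def sh_def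
    using mult_diff[OF S(3) rn_mult[OF rn p1 S(3)]] .
  have "\<bar>sl + v\<bar> \<le> \<bar>sl\<bar> + \<bar>L\<bar> + \<bar>v - L\<bar>" by linarith
  also have "\<dots> \<le> 2 * U" using dsl L d1 uU by linarith
  finally have slv: "\<bar>sl + v\<bar> \<le> pw (e - int p + 1)" using pf by simp
  then have d2: "\<bar>w - (sl + v)\<bar> \<le> u * U" unfolding w_def using rn_err_pw[OF rn p1] pf by metis
  have Eeq: "sh + w - (S + L) = (w - (sl + v)) + (v - L)" unfolding sl_def by simp
  have tri: "\<bar>sh + w - (S + L)\<bar> \<le> \<bar>w - (sl + v)\<bar> + \<bar>v - L\<bar>" unfolding Eeq by (rule abs_triangle_ineq)
  have E0: "\<bar>sh + w - (S + L)\<bar> \<le> 3/2 * (u * U)"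
  proof (cases "\<bar>L\<bar> \<le> U")
    case True
    then have "\<bar>L\<bar> \<le> pw (e - int p)" using U by simp
    then have "\<bar>v - L\<bar> \<le> pw (e - int p - 1 - int p)" unfolding v_def using rn_err_pw[OF rn p1] by blast
    then have "\<bar>v - L\<bar> \<le> u * U / 2" using pf by simp
    then show ?thesis using tri d2 by linarith
  next
    case False
    then have "pw (e - int p) \<le> \<bar>v\<bar>" unfolding v_def using rn_abs_ge[OF rn Fp_pw[OF p1], of "e - int p" L] U by simp
    then have mv: "mult (pw (e - int p + 1 - int p)) v" using Fp_mult_big[OF vF] by blast
    have "mult (pw (e - int p + 1 - int p)) sl" using mult_pw_mono[OF _ msl, of "e - int p + 1 - int p"] p by simp
    then have m: "mult (pw (e - int p + 1 - int p)) (sl + v)" using mult_add mv by blast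
    have "sl + v \<in> Fp p" using grid_Fp[OF p1 m] slv by (simp add: algebra_simps)
    then have "w = sl + v" unfolding w_def using rn_id[OF rn] by blast
    then show ?thesis using tri d1 mult_pos_pos[OF u8(2) Up] by simp
  qed
  have E: "\<bar>sh + w - (S + L)\<bar> \<le> 3/2 * (u * (u * A))" using E0 pf by simp
  have SL: "\<bar>S + L\<bar> \<ge> 1/2 * A - 5/4 * (u * A)" using S L pf by simp
  have R: "\<bar>sh + w - (S + L)\<bar> * (1 - 3 * u) \<le> 3 * u^2 * \<bar>S + L\<bar>"
    by (rule fin[OF Ap u8(2) u8(1) E SL]) (use u8 in simp_all)
  have "\<bar>w\<bar> \<le> pw (e - int p + 1)" unfolding w_def using rn_abs_le[OF rn Fp_pw[OF p1] slv] .
  also have "\<dots> = 2 * (u * A)" using pf by simp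
  also have "\<dots> \<le> A / 2" using u8 Ap by simp
  also have "A / 2 \<le> \<bar>sh\<bar>" unfolding sh_def using rn_abs_ge[OF rn Fp_pw[OF p1], of "e - 1" S] S pf Ap by simp
  finally have W: "\<bar>w\<bar> \<le> \<bar>sh\<bar>" .
  have "u * A \<le> A / 8" using u8 Ap by simp
  then have "S + L \<noteq> 0" using SL Ap by auto
  then show ?thesis unfolding concl1_def using R W
    unfolding sh_def sl_def v_def w_def u_def by simp
qed



lemma abs_sum_opp:
  fixes H h :: real
  assumes "H * h < 0" "\<bar>h\<bar> \<le> \<bar>H\<bar>"
  shows "\<bar>H + h\<bar> = \<bar>H\<bar> - \<bar>h\<bar>"
  using assms by (auto simp: abs_if mult_less_0_iff)

lemma packages:
  assumes rn: "is_RN p rn" and p: "p \<ge> 3" and F: "H \<in> Fp p" "h \<in> Fp p"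
    and opp: "H * h < 0" and hH: "2 * \<bar>h\<bar> \<le> \<bar>H\<bar>"
    and r1: "rn (H + HL) = H" and r2: "rn (h + hl) = h"
  shows "concl1 p rn (H + h) (HL + hl)"
proof -
  have p1: "p \<ge> 1" using p by simp
  have H0: "H \<noteq> 0" and h0: "h \<noteq> 0" using opp by auto
  obtain e where e: "pw e \<le> \<bar>H\<bar>" "\<bar>H\<bar> < pw (e + 1)" "mult (pw (e + 1 - int p)) H"
    using Fp_norm[OF F(1) H0] by blast
  define A where "A = pw e"
  define U where "U = pw (e - int p)"
  note pf = case_prelude[OF p A_def U_def]
  have Ap: "A > 0" "U > 0" unfolding A_def U_def by simp_all
  have A2: "pw (e + 1) = 2 * A" unfolding A_def by (simp add: pw_succ)
  have A4: "pw (e - 2) = A / 4" unfolding A_def using pw_eq[of e "e - 2" 2] pw_nat[of 2] by simp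
  have U4: "pw (e - 1 - 1 - int p) = U / 4" unfolding U_def
    using pw_eq[of "e - int p" "e - 1 - 1 - int p" 2] pw_nat[of 2] by simp
  have U8: "pw (e - 2 - 1 - int p) = U / 8" unfolding U_def
    using pw_eq[of "e - int p" "e - 2 - 1 - int p" 3] pw_nat[of 3] by simp
  have HL: "\<bar>HL\<bar> \<le> U" using low_bound[OF rn p1 F(1) H0 r1 e(2)] unfolding U_def by simp
  have hA: "\<bar>h\<bar> < A" using hH e A2 A_def by simp
  have hl: "\<bar>hl\<bar> \<le> U / 2" using low_bound[OF rn p1 F(2) h0 r2, of e] hA pf unfolding A_def by simp
  have S: "\<bar>H + h\<bar> = \<bar>H\<bar> - \<bar>h\<bar>" using abs_sum_opp[OF opp] hH by simp
  have Ltri: "\<bar>HL + hl\<bar> \<le> \<bar>HL\<bar> + \<bar>hl\<bar>" by (rule abs_triangle_ineq)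
  consider "A \<le> \<bar>H + h\<bar>" | "\<bar>H + h\<bar> < A" "A / 2 \<le> \<bar>h\<bar>" | "\<bar>H + h\<bar> < A" "A / 4 \<le> \<bar>h\<bar>" "\<bar>h\<bar> < A / 2"
    | "\<bar>H + h\<bar> < A" "\<bar>h\<bar> < A / 4" by linarith
  then show ?thesis
  proof cases
    case 1
    have "\<bar>H + h\<bar> \<le> 2 * A" using S e A2 A_def abs_ge_zero[of h] by linarith
    moreover have "\<bar>HL + hl\<bar> \<le> 3/2 * U" using Ltri HL hl by linarith
    ultimately show ?thesis by (rule case1[OF rn p A_def U_def 1])
  next
    case 2
    have "mult (pw (e - 1 + 1 - int p)) h" using Fp_mult_big[OF F(2), of "e - 1"] 2 pf by simp
    then have mh: "mult (pw (e - int p)) h" by simp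
    have mH: "mult (pw (e - int p)) H" using mult_pw_mono[OF _ e(3), of "e - int p"] by simp
    have m: "mult U (H + h)" using mult_add[OF mH mh] unfolding U_def by simp
    have s1: "A / 2 \<le> \<bar>H + h\<bar>" using S e hH A_def by linarith
    have s2: "\<bar>H + h\<bar> \<le> A" using 2 by linarith
    have L: "\<bar>HL + hl\<bar> \<le> 3/2 * U" using Ltri HL hl by linarith
    show ?thesis by (rule case2[OF rn p A_def U_def s1 s2 m L])
  next
    case 3
    have hl4: "\<bar>hl\<bar> \<le> U / 4" using low_bound[OF rn p1 F(2) h0 r2, of "e - 1"] 3 pf U4 by simp
    have "mult (pw (e - 2 + 1 - int p)) h" using Fp_mult_big[OF F(2), of "e - 2"] 3 A4 by simp
    then have mh: "mult (pw (e - int p - 1)) h" by (simp add: algebra_simps)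
    have mH: "mult (pw (e - int p - 1)) H" using mult_pw_mono[OF _ e(3), of "e - int p - 1"] by simp
    have m: "mult (pw (e - int p - 1)) (H + h)" using mult_add[OF mH mh] .
    have s1: "A / 2 \<le> \<bar>H + h\<bar>" using S e hH A_def by linarith
    have s2: "\<bar>H + h\<bar> \<le> A" using 3 by linarith
    have L: "\<bar>HL + hl\<bar> \<le> 5/4 * U" using Ltri HL hl4 by linarith
    show ?thesis by (rule case3[OF rn p A_def U_def s1 s2 m L])
  next
    case 4
    have hl8: "\<bar>hl\<bar> \<le> U / 8" using low_bound[OF rn p1 F(2) h0 r2, of "e - 2"] 4 A4 U8 by simp
    have s1: "3/4 * A \<le> \<bar>H + h\<bar>" using S e 4 A_def by linarith
    have s2: "\<bar>H + h\<bar> \<le> A" using 4 by linarith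
    have L: "\<bar>HL + hl\<bar> \<le> 9/8 * U" using Ltri HL hl8 by linarith
    show ?thesis by (rule case4[OF rn p A_def U_def s1 s2 L])
  qed
qed



lemma sloppy_eq: "TwoSum rn xh yh = (sh, sl) \<Longrightarrow>
  sloppy_add rn xh xl yh yl = Fast2Sum rn sh (rn (sl + rn (xl + yl)))"
  by (simp add: sloppy_add_def)

lemma final_ineq:
  fixes E X u :: real
  assumes u: "u > 0" "u \<le> 1/8" and E: "E * (1 - 3 * u) \<le> 3 * u^2 * X" and X: "X > 0"
  shows "E / X \<le> 3 * u^2 + 18 * u^3"
proof -
  have "3 * u^2 \<le> (3 * u^2 + 18 * u^3) * (1 - 3 * u)"
  proof -
    have "(3 * u^2 + 18 * u^3) * (1 - 3 * u) - 3 * u^2 = 9 * u^3 * (1 - 6 * u)"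
      by (simp add: algebra_simps power2_eq_square power3_eq_cube)
    moreover have "9 * u^3 * (1 - 6 * u) \<ge> 0" using u by simp
    ultimately show ?thesis by linarith
  qed
  then have "3 * u^2 * X \<le> (3 * u^2 + 18 * u^3) * (1 - 3 * u) * X" using X by (intro mult_right_mono) auto
  then have "E * (1 - 3 * u) \<le> ((3 * u^2 + 18 * u^3) * X) * (1 - 3 * u)" using E by (simp add: algebra_simps)
  then have "E \<le> (3 * u^2 + 18 * u^3) * X" using u by (simp add: mult_le_cancel_right)
  then show ?thesis using X by (simp add: divide_le_eq)
qed

lemma part1_pos:
  assumes rn: "is_RN p rn" and p: "p \<ge> 3"
    and F: "xh \<in> Fp p" "xl \<in> Fp p" "yh \<in> Fp p" "yl \<in> Fp p"
    and r: "rn (xh + xl) = xh" "rn (yh + yl) = yh" and sg: "xh > 0" "yh < 0"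
    and rat: "ratio_r xh yh \<le> 1/2"
  shows "rel_err (sloppy_add rn xh xl yh yl) (xh + xl + yh + yl)
           \<le> 3 * unit_round p ^ 2 + 18 * unit_round p ^ 3"
proof -
  have p1: "p \<ge> 1" and p2: "p \<ge> 2" using p by simp_all
  define S where "S = xh + yh"
  define L where "L = xl + yl"
  have opp: "xh * yh < 0" using sg by (simp add: mult_pos_neg)
  have cases: "- yh \<le> xh / 2 \<or> xh \<le> - yh / 2"
  proof (cases "- yh \<le> xh")
    case True
    then have "ratio_r xh yh = - yh / xh" unfolding ratio_r_def using opp sg by simp
    then have "- yh / xh \<le> 1/2" using rat by simp
    moreover have "- yh = (- yh / xh) * xh" using sg by simp
    ultimately have "- yh \<le> 1/2 * xh" using sg by (metis mult_right_mono less_imp_le)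
    then show ?thesis by simp
  next
    case False
    then have "ratio_r xh yh = xh / (- yh)" unfolding ratio_r_def using opp sg by simp
    then have "xh / (- yh) \<le> 1/2" using rat by simp
    moreover have "xh = (xh / (- yh)) * (- yh)" using sg by simp
    ultimately have "xh \<le> 1/2 * (- yh)" using sg by (metis mult_right_mono less_imp_le neg_0_less_iff_less)
    then show ?thesis by simp
  qed
  have ts: "TwoSum rn xh yh = (rn S, S - rn S)"
    using cases twosum_A[OF rn p2 F(1) F(3) sg] twosum_B[OF rn p1 F(1) F(3) sg] unfolding S_def by auto
  have c: "concl1 p rn S L"
  proof (cases "- yh \<le> xh / 2")
    case True
    show ?thesis using packages[OF rn p F(1) F(3) opp _ r] True sg unfolding S_def L_def by simp
  next
    case False
    then have "xh \<le> - yh / 2" using cases by simp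
    then have "concl1 p rn (yh + xh) (yl + xl)" using packages[OF rn p F(3) F(1) _ _ r(2) r(1)] opp sg
      by (simp add: mult.commute)
    then show ?thesis unfolding S_def L_def by (simp add: add.commute)
  qed
  define w where "w = rn (S - rn S + rn L)"
  have sl: "sloppy_add rn xh xl yh yl = Fast2Sum rn (rn S) w"
    using sloppy_eq[OF ts] unfolding w_def L_def by simp
  have W: "\<bar>w\<bar> \<le> \<bar>rn S\<bar>" using c unfolding concl1_def w_def by simp
  have sum: "fst (Fast2Sum rn (rn S) w) + snd (Fast2Sum rn (rn S) w) = rn S + w"
    using fast2sum_exact(2)[OF rn p1 rn_Fp[OF rn] _ W] unfolding w_def using rn_Fp[OF rn] by blast
  have x: "xh + xl + yh + yl = S + L" unfolding S_def L_def by simp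
  have "rel_err (sloppy_add rn xh xl yh yl) (xh + xl + yh + yl) = \<bar>rn S + w - (S + L)\<bar> / \<bar>S + L\<bar>"
    unfolding rel_err_def sl sum x ..
  also have "\<dots> \<le> 3 * unit_round p ^ 2 + 18 * unit_round p ^ 3"
    using c unfolding concl1_def w_def
    by (intro final_ineq) (use u_pos[of p] u_le8[OF p] in auto)
  finally show ?thesis .
qed

lemma ratio_neg: "ratio_r (- x) (- y) = ratio_r x y"
  unfolding ratio_r_def by simp

lemma rel_err_neg: "rel_err (- a, - b) (- x) = rel_err (a, b) x"
proof -
  have "- a + - b - - x = - (a + b - x)" by simp
  then show ?thesis unfolding rel_err_def fst_conv snd_conv by (simp only: abs_minus_cancel)
qed

lemma sloppy_neg_err:
  "rel_err (sloppy_add (\<lambda>x. - rn (- x)) (- xh) (- xl) (- yh) (- yl)) (- xh + - xl + - yh + - yl)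
      = rel_err (sloppy_add rn xh xl yh yl) (xh + xl + yh + yl)"
proof -
  have e: "- xh + - xl + - yh + - yl = - (xh + xl + yh + yl)" by simp
  show ?thesis unfolding sloppy_neg e rel_err_neg by simp
qed

lemma part1:
  assumes rn: "is_RN p rn" and p: "p \<ge> 3"
    and F: "xh \<in> Fp p" "xl \<in> Fp p" "yh \<in> Fp p" "yl \<in> Fp p"
    and r: "rn (xh + xl) = xh" "rn (yh + yl) = yh" and opp: "xh * yh < 0"
    and rat: "ratio_r xh yh \<le> 1/2"
  shows "rel_err (sloppy_add rn xh xl yh yl) (xh + xl + yh + yl)
           \<le> 3 * unit_round p ^ 2 + 18 * unit_round p ^ 3"
proof (cases "xh > 0")
  case True
  then have "yh < 0" using opp by (simp add: mult_less_0_iff)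
  then show ?thesis using part1_pos[OF rn p F r True _ rat] by simp
next
  case False
  then have sg: "- xh > 0" "- yh < 0" using opp by (auto simp: mult_less_0_iff)
  define rn' where "rn' = (\<lambda>x. - rn (- x))"
  have rn': "is_RN p rn'" unfolding rn'_def using is_RN_neg[OF rn] .
  have r': "rn' (- xh + - xl) = - xh" "rn' (- yh + - yl) = - yh" unfolding rn'_def using r by (simp_all add: add.commute)
  have rat': "ratio_r (- xh) (- yh) \<le> 1/2" using rat ratio_neg by simp
  have "rel_err (sloppy_add rn' (- xh) (- xl) (- yh) (- yl)) (- xh + - xl + - yh + - yl)
           \<le> 3 * unit_round p ^ 2 + 18 * unit_round p ^ 3"
    using part1_pos[OF rn' p _ _ _ _ r' sg rat'] F by simp
  moreover have "rel_err (sloppy_add rn' (- xh) (- xl) (- yh) (- yl)) (- xh + - xl + - yh + - yl)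
      = rel_err (sloppy_add rn xh xl yh yl) (xh + xl + yh + yl)"
    unfolding rn'_def by (rule sloppy_neg_err)
  ultimately show ?thesis by simp
qed



lemma mult_abs: "mult g x \<Longrightarrow> mult g \<bar>x\<bar>"
  by (cases "x \<ge> 0") (auto intro: mult_neg)

lemma claim2:
  assumes rn: "is_RN p rn" and p: "p \<ge> 2" and F: "H \<in> Fp p" "h \<in> Fp p"
    and r1: "rn (H + HL) = H" and r2: "rn (h + hl) = h"
    and opp: "H * h < 0" and hH: "\<bar>h\<bar> \<le> \<bar>H\<bar>" and Hh: "\<bar>H\<bar> \<le> 2 * \<bar>h\<bar>" and S0: "H + h \<noteq> 0"
    and fex: "\<exists>f\<in>Fp p. \<bar>h\<bar> < f \<and> f < \<bar>H\<bar>"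
  shows "\<bar>rn (HL + hl)\<bar> \<le> \<bar>H + h\<bar> \<and> \<bar>HL + hl\<bar> \<le> \<bar>H + h + (HL + hl)\<bar>"
proof -
  have p1: "p \<ge> 1" using p by simp
  have H0: "H \<noteq> 0" and h0: "h \<noteq> 0" using opp by auto
  obtain e where e: "pw e \<le> \<bar>H\<bar>" "\<bar>H\<bar> < pw (e + 1)" "mult (pw (e + 1 - int p)) H"
    using Fp_norm[OF F(1) H0] by blast
  obtain f where f: "f \<in> Fp p" "\<bar>h\<bar> < f" "f < \<bar>H\<bar>" using fex by blast
  define A where "A = pw e"
  define U where "U = pw (e - int p)"
  have Up: "U > 0" unfolding U_def by simp
  have U2: "pw (e + 1 - int p) = 2 * U" "pw (e - int p + 1) = 2 * U" unfolding U_def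
    using pw_succ[of "e - int p"] by (simp_all add: algebra_simps)
  have A2: "pw (e + 1) = 2 * A" "pw (e - 1) = A / 2" unfolding A_def by (simp_all add: pw_succ pw_pred)
  have Uh: "pw (e - 1 - int p) = U / 2" unfolding U_def using pw_pred[of "e - int p"] by (simp add: algebra_simps)
  define S where "S = H + h"
  define L where "L = HL + hl"
  define v where "v = rn L"
  have D: "\<bar>S\<bar> = \<bar>H\<bar> - \<bar>h\<bar>" unfolding S_def using abs_sum_opp[OF opp hH] .
  have Dp: "\<bar>S\<bar> > 0" using S0 unfolding S_def by simp
  have HL: "\<bar>HL\<bar> \<le> U" using low_bound[OF rn p1 F(1) H0 r1 e(2)] unfolding U_def by simp
  have mH: "mult (2 * U) \<bar>H\<bar>" using mult_abs[OF e(3)] U2 by simp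
  have mHU: "mult U \<bar>H\<bar>" using mult_abs[OF mult_pw_mono[OF _ e(3), of "e - int p"]] unfolding U_def by simp
  have tri: "\<bar>S\<bar> \<le> \<bar>S + L\<bar> + \<bar>L\<bar>" using abs_triangle_ineq[of "S + L" "- L"] by simp
  have vb: "\<bar>L\<bar> \<le> 2 * U \<Longrightarrow> \<bar>v\<bar> \<le> 2 * U"
    unfolding v_def using rn_abs_le[OF rn Fp_pw[OF p1], of L "e - int p + 1"] U2 by simp
  have fF: "\<bar>f\<bar> = f" using f abs_ge_zero[of h] by linarith
  show ?thesis
  proof (cases "A \<le> \<bar>h\<bar>")
    case True
    have hl: "\<bar>hl\<bar> \<le> U" using low_bound[OF rn p1 F(2) h0 r2, of "e + 1"] hH e(2) unfolding U_def by simp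
    have mh: "mult (2 * U) \<bar>h\<bar>" using mult_abs[OF Fp_mult_big[OF F(2), of e]] True U2 A_def by simp
    have mf: "mult (2 * U) f" using Fp_mult_big[OF f(1), of e] True f(2) U2 fF A_def by simp
    have "\<bar>H\<bar> - f \<ge> of_int (0 + 1) * (2 * U)" using mult_gt[OF mult_diff[OF mH mf], of 0] f Up by simp
    moreover have "f - \<bar>h\<bar> \<ge> of_int (0 + 1) * (2 * U)" using mult_gt[OF mult_diff[OF mf mh], of 0] f Up by simp
    ultimately have D4: "\<bar>S\<bar> \<ge> 4 * U" using D by simp
    have L2: "\<bar>L\<bar> \<le> 2 * U" unfolding L_def using abs_triangle_ineq[of HL hl] HL hl by linarith
    show ?thesis using vb[OF L2] L2 D4 tri unfolding S_def L_def v_def by linarith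
  next
    case False
    have hA: "A / 2 \<le> \<bar>h\<bar>" using Hh e A_def by linarith
    have hl: "\<bar>hl\<bar> \<le> U / 2" using low_bound[OF rn p1 F(2) h0 r2, of e] False Uh A_def by simp
    have mh: "mult U \<bar>h\<bar>" using mult_abs[OF Fp_mult_big[OF F(2), of "e - 1"]] hA A2 unfolding U_def by simp
    have mD: "mult U \<bar>S\<bar>" using mult_diff[OF mHU mh] D by simp
    have L15: "\<bar>L\<bar> \<le> 3/2 * U" unfolding L_def using abs_triangle_ineq[of HL hl] HL hl by linarith
    have D2: "\<bar>S\<bar> \<ge> 2 * U"
    proof (cases "A \<le> f")
      case True
      have mf: "mult (2 * U) f" using Fp_mult_big[OF f(1), of e] True U2 fF A_def by simp
      have "\<bar>H\<bar> - f \<ge> of_int (0 + 1) * (2 * U)" using mult_gt[OF mult_diff[OF mH mf], of 0] f Up by simp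
      then show ?thesis using D f by simp
    next
      case False': False
      have mf: "mult U f" using Fp_mult_big[OF f(1), of "e - 1"] hA f(2) A2 fF unfolding U_def by simp
      have "\<bar>H\<bar> - f \<ge> of_int (0 + 1) * U" using mult_gt[OF mult_diff[OF mHU mf], of 0] f Up by simp
      moreover have "f - \<bar>h\<bar> \<ge> of_int (0 + 1) * U" using mult_gt[OF mult_diff[OF mf mh], of 0] f Up by simp
      ultimately show ?thesis using D by simp
    qed
    have V: "\<bar>v\<bar> \<le> \<bar>S\<bar>" using vb L15 D2 Up by simp
    have "\<bar>L\<bar> \<le> \<bar>S + L\<bar>"
    proof (cases "\<bar>S\<bar> > of_int 2 * U")
      case True
      then have "\<bar>S\<bar> \<ge> of_int (2 + 1) * U" using mult_gt[OF mD Up] by blast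
      then show ?thesis using tri L15 by simp
    next
      case False': False
      then have DS: "\<bar>S\<bar> = 2 * U" using D2 by simp
      have hlb: "- (U / 2) \<le> hl" "hl \<le> U / 2" using abs_le_iff[THEN iffD1, OF hl] by auto
      have Lb: "- (3/2 * U) \<le> L" "L \<le> 3/2 * U" using abs_le_iff[THEN iffD1, OF L15] by auto
      have HA: "\<bar>H\<bar> = A"
      proof (rule ccontr)
        assume "\<bar>H\<bar> \<noteq> A"
        then have "\<bar>H\<bar> > A" using e A_def by simp
        moreover have "mult (2 * U) A" using Fp_mult_big[OF Fp_pw[OF p1], of e e] U2 A_def by simp
        ultimately have "\<bar>H\<bar> - A \<ge> of_int (0 + 1) * (2 * U)" using mult_gt[OF mult_diff[OF mH], of A 0] Up by simp
        then show False using D DS False by simp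
      qed
      show ?thesis
      proof (cases "H > 0")
        case True
        then have "H = pw e" using HA A_def by simp
        then have "HL \<ge> - (U / 2)" using low_bound_pow[OF rn p1, of e HL] r1 Uh by simp
        moreover have "h < 0" using True opp by (simp add: mult_less_0_iff)
        then have "S = 2 * U" using DS D True unfolding S_def by simp
        moreover have "- U \<le> L" "L \<le> 3/2 * U" using hlb Lb calculation(1) unfolding L_def by linarith+
        ultimately have "\<bar>L\<bar> \<le> S + L" using Up by (simp add: abs_if)
        then show ?thesis by simp
      next
        case False
        then have Hn: "H < 0" using H0 by simp
        then have "H = - pw e" using HA A_def by simp
        then have "HL \<le> U / 2" using low_bound_pow_neg[OF rn p1, of e HL] r1 Uh by simp
        moreover have "h > 0" using Hn opp by (simp add: mult_less_0_iff)
        then have "S = - (2 * U)" using DS D Hn unfolding S_def by simp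
        moreover have "L \<le> U" "- (3/2 * U) \<le> L" using hlb Lb calculation(1) unfolding L_def by linarith+
        ultimately have "\<bar>L\<bar> \<le> - (S + L)" using Up by (simp add: abs_if)
        then show ?thesis by simp
      qed
    qed
    then show ?thesis using V unfolding S_def L_def v_def by simp
  qed
qed



lemma part2_pos:
  assumes rn: "is_RN p rn" and p: "p \<ge> 2"
    and F: "xh \<in> Fp p" "xl \<in> Fp p" "yh \<in> Fp p" "yl \<in> Fp p"
    and r: "rn (xh + xl) = xh" "rn (yh + yl) = yh" and sg: "xh > 0" "yh < 0"
    and rat: "ratio_r xh yh > 1/2"
    and nc: "\<bar>xh\<bar> = \<bar>yh\<bar> \<or> (\<exists>f\<in>Fp p. min \<bar>xh\<bar> \<bar>yh\<bar> < f \<and> f < max \<bar>xh\<bar> \<bar>yh\<bar>)"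
  shows "rel_err (sloppy_add rn xh xl yh yl) (xh + xl + yh + yl) \<le> unit_round p"
proof -
  have p1: "p \<ge> 1" using p by simp
  have opp: "xh * yh < 0" using sg by (simp add: mult_pos_neg)
  have rb: "- yh \<le> 2 * xh \<and> xh \<le> 2 * (- yh)"
  proof (cases "- yh \<le> xh")
    case True
    then have "ratio_r xh yh = - yh / xh" unfolding ratio_r_def using opp sg by simp
    then have "1/2 < - yh / xh" using rat by simp
    moreover have "- yh = (- yh / xh) * xh" using sg by simp
    ultimately have "1/2 * xh \<le> - yh" using sg by (metis mult_right_mono less_imp_le)
    then show ?thesis using True sg by simp
  next
    case False
    then have "ratio_r xh yh = xh / (- yh)" unfolding ratio_r_def using opp sg by simp
    then have "1/2 < xh / (- yh)" using rat by simp
    moreover have "xh = (xh / (- yh)) * (- yh)" using sg by simp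
    ultimately have "1/2 * (- yh) \<le> xh" using sg by (metis mult_right_mono less_imp_le neg_0_less_iff_less)
    then show ?thesis using False sg by simp
  qed
  define S where "S = xh + yh"
  define L where "L = xl + yl"
  define v where "v = rn L"
  have vF: "v \<in> Fp p" unfolding v_def using rn_Fp[OF rn] .
  have "xh * (- yh) \<ge> 0" using opp by simp
  then have "xh - (- yh) \<in> Fp p" using sterbenz[OF p1 F(1) Fp_neg[OF F(3)]] sg rb by simp
  then have SF: "S \<in> Fp p" unfolding S_def by simp
  have ts: "TwoSum rn xh yh = (S, 0)" using twosum_exact_sum[OF rn p1 F(1) F(3)] SF unfolding S_def by simp
  have w: "rn (0 + v) = v" using rn_id[OF rn vF] by simp
  have sl: "sloppy_add rn xh xl yh yl = Fast2Sum rn S v" using sloppy_eq[OF ts] w unfolding v_def L_def by simp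
  have key: "fst (Fast2Sum rn S v) + snd (Fast2Sum rn S v) = S + v \<and> \<bar>L\<bar> \<le> \<bar>S + L\<bar>"
  proof (cases "S = 0")
    case True
    have "rn v = v" using rn_id[OF rn vF] .
    moreover have "rn 0 = 0" using rn_id[OF rn Fp_0] .
    ultimately show ?thesis using True unfolding Fast2Sum_def Let_def by simp
  next
    case False
    have c: "\<bar>rn L\<bar> \<le> \<bar>S\<bar> \<and> \<bar>L\<bar> \<le> \<bar>S + L\<bar>"
    proof (cases "- yh \<le> xh")
      case True
      have "\<exists>f\<in>Fp p. \<bar>yh\<bar> < f \<and> f < \<bar>xh\<bar>" using nc True sg False unfolding S_def by auto
      then show ?thesis using claim2[OF rn p F(1) F(3) r opp _ _ _] True sg rb False unfolding S_def L_def by auto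
    next
      case False': False
      have "\<exists>f\<in>Fp p. \<bar>xh\<bar> < f \<and> f < \<bar>yh\<bar>" using nc False' sg False unfolding S_def by auto
      moreover have "yh * xh < 0" using opp by (simp add: mult.commute)
      ultimately have "\<bar>rn (yl + xl)\<bar> \<le> \<bar>yh + xh\<bar> \<and> \<bar>yl + xl\<bar> \<le> \<bar>yh + xh + (yl + xl)\<bar>"
        using claim2[OF rn p F(3) F(1) r(2) r(1)] False' sg rb False unfolding S_def by auto
      then show ?thesis unfolding S_def L_def by (simp add: add.commute add.left_commute)
    qed
    have "fst (Fast2Sum rn S v) + snd (Fast2Sum rn S v) = S + v"
      using fast2sum_exact(2)[OF rn p1 SF vF] c unfolding v_def by simp
    then show ?thesis using c by simp
  qed
  have x: "xh + xl + yh + yl = S + L" unfolding S_def L_def by simp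
  have "rel_err (sloppy_add rn xh xl yh yl) (xh + xl + yh + yl) = \<bar>v - L\<bar> / \<bar>S + L\<bar>"
    unfolding rel_err_def sl x using key by simp
  also have "\<dots> \<le> unit_round p"
  proof (cases "S + L = 0")
    case True then show ?thesis using u_pos[of p] by simp
  next
    case False
    have "\<bar>v - L\<bar> \<le> unit_round p * \<bar>L\<bar>" unfolding v_def using rn_err_rel[OF rn p1] .
    also have "\<dots> \<le> unit_round p * \<bar>S + L\<bar>" using key u_pos[of p] by (intro mult_left_mono) auto
    finally show ?thesis using False by (simp add: divide_le_eq)
  qed
  finally show ?thesis .
qed

lemma part2:
  assumes rn: "is_RN p rn" and p: "p \<ge> 2"
    and F: "xh \<in> Fp p" "xl \<in> Fp p" "yh \<in> Fp p" "yl \<in> Fp p"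
    and r: "rn (xh + xl) = xh" "rn (yh + yl) = yh"
    and rat: "ratio_r xh yh > 1/2" and ncf: "\<not> consecutive_floats p \<bar>xh\<bar> \<bar>yh\<bar>"
  shows "rel_err (sloppy_add rn xh xl yh yl) (xh + xl + yh + yl) \<le> unit_round p"
proof -
  have opp: "xh * yh < 0" using rat unfolding ratio_r_def by (auto split: if_splits)
  have nc: "\<bar>xh\<bar> = \<bar>yh\<bar> \<or> (\<exists>f\<in>Fp p. min \<bar>xh\<bar> \<bar>yh\<bar> < f \<and> f < max \<bar>xh\<bar> \<bar>yh\<bar>)"
    using ncf F unfolding consecutive_floats_def by auto
  show ?thesis
  proof (cases "xh > 0")
    case True
    then have "yh < 0" using opp by (simp add: mult_less_0_iff)
    then show ?thesis using part2_pos[OF rn p F r True _ rat nc] by simp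
  next
    case False
    then have sg: "- xh > 0" "- yh < 0" using opp by (auto simp: mult_less_0_iff)
    define rn' where "rn' = (\<lambda>x. - rn (- x))"
    have rn': "is_RN p rn'" unfolding rn'_def using is_RN_neg[OF rn] .
    have r': "rn' (- xh + - xl) = - xh" "rn' (- yh + - yl) = - yh" unfolding rn'_def using r by (simp_all add: add.commute)
    have rat': "ratio_r (- xh) (- yh) > 1/2" using rat ratio_neg by simp
    have nc': "\<bar>- xh\<bar> = \<bar>- yh\<bar> \<or> (\<exists>f\<in>Fp p. min \<bar>- xh\<bar> \<bar>- yh\<bar> < f \<and> f < max \<bar>- xh\<bar> \<bar>- yh\<bar>)"
      using nc by simp
    have "rel_err (sloppy_add rn' (- xh) (- xl) (- yh) (- yl)) (- xh + - xl + - yh + - yl) \<le> unit_round p"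
      using part2_pos[OF rn' p _ _ _ _ r' sg rat' nc'] F by simp
    moreover have "rel_err (sloppy_add rn' (- xh) (- xl) (- yh) (- yl)) (- xh + - xl + - yh + - yl)
        = rel_err (sloppy_add rn xh xl yh yl) (xh + xl + yh + yl)"
      unfolding rn'_def by (rule sloppy_neg_err)
    ultimately show ?thesis by simp
  qed
qed

theorem theorem3:
  shows
  "(\<exists>C p0. \<forall>p \<ge> p0. \<forall>rn. is_RN p rn \<longrightarrow>
      (\<forall>xh xl yh yl. xh \<in> Fp p \<and> xl \<in> Fp p \<and> yh \<in> Fp p \<and> yl \<in> Fp p \<and>
         rn (xh + xl) = xh \<and> rn (yh + yl) = yh \<and> xh * yh < 0 \<and>
         ratio_r xh yh \<le> 1/2 \<longrightarrow>
         rel_err (sloppy_add rn xh xl yh yl) (xh + xl + yh + yl)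
           \<le> 3 * unit_round p ^ 2 + C * unit_round p ^ 3))
   \<and>
   (\<forall>p \<ge> 2. \<forall>rn. is_RN p rn \<and> (ties_to_even p rn \<or> ties_to_away p rn) \<longrightarrow>
      (\<forall>xh xl yh yl. xh \<in> Fp p \<and> xl \<in> Fp p \<and> yh \<in> Fp p \<and> yl \<in> Fp p \<and>
         rn (xh + xl) = xh \<and> rn (yh + yl) = yh \<and> xh * yh < 0 \<and>
         ratio_r xh yh > 1/2 \<and> \<not> consecutive_floats p \<bar>xh\<bar> \<bar>yh\<bar> \<longrightarrow>
         rel_err (sloppy_add rn xh xl yh yl) (xh + xl + yh + yl) \<le> unit_round p))"
proof (intro conjI)
  show "\<exists>C p0. \<forall>p \<ge> p0. \<forall>rn. is_RN p rn \<longrightarrow>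
      (\<forall>xh xl yh yl. xh \<in> Fp p \<and> xl \<in> Fp p \<and> yh \<in> Fp p \<and> yl \<in> Fp p \<and>
         rn (xh + xl) = xh \<and> rn (yh + yl) = yh \<and> xh * yh < 0 \<and>
         ratio_r xh yh \<le> 1/2 \<longrightarrow>
         rel_err (sloppy_add rn xh xl yh yl) (xh + xl + yh + yl)
           \<le> 3 * unit_round p ^ 2 + C * unit_round p ^ 3)"
    using part1 by (intro exI[of _ 18] exI[of _ 3]) blast
  show "\<forall>p \<ge> 2. \<forall>rn. is_RN p rn \<and> (ties_to_even p rn \<or> ties_to_away p rn) \<longrightarrow>
      (\<forall>xh xl yh yl. xh \<in> Fp p \<and> xl \<in> Fp p \<and> yh \<in> Fp p \<and> yl \<in> Fp p \<and>
         rn (xh + xl) = xh \<and> rn (yh + yl) = yh \<and> xh * yh < 0 \<and>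
         ratio_r xh yh > 1/2 \<and> \<not> consecutive_floats p \<bar>xh\<bar> \<bar>yh\<bar> \<longrightarrow>
         rel_err (sloppy_add rn xh xl yh yl) (xh + xl + yh + yl) \<le> unit_round p)"
    using part2 by blast
qed

end
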